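(* Let $M\ge1$. Given any $k\in\{0\}\times\mathbb{Z}^M_+$ and any $m\in\mathbb{Z}^{M+1}$ with $0\leq m\leq \min\{k,\tilde{k}\}$, there exists a transmission scattering sequence $\mathsf{p}\in\mathsf{S}_M^\prime$ such that $\bigl(\kappa^\prime(\mathsf{p}),\beta^\prime(\mathsf{p})\bigr)=(k,m)$.
   Context: Fix depths $z_{-1}<z_0<\cdots<z_M<z_{M+1}$; $\mathbb{Z}_+$ denotes the nonnegative integers. A transmission scattering sequence is a finite sequence $\mathsf{p}=(\mathsf{p}_0,\ldots,\mathsf{p}_L)$ with $\mathsf{p}_0=z_{-1}$, $\mathsf{p}_L=z_{M+1}$, $\mathsf{p}_i\in\{z_0,\ldots,z_M\}$ for $1\le i\le L-1$, and for every $0\le i\le L-1$ there is $-1\le j\le M$ with $\{\mathsf{p}_i,\mathsf{p}_{i+1}\}=\{z_j,z_{j+1}\}$; $\mathsf{S}_M^\prime$ is the set of these. For $0\le n\le M$, consider the maximal runs of consecutive indices $i$ with $\mathsf{p}_i\in\{z_n,\ldots,z_{M+1}\}$; the last such run (containing index $L$) is called the trunk run. Let $k_n$ be the number of such runs other than the trunk run, and $m_n$ the number of non-trunk runs of length at least 2. Set $\kappa^\prime(\mathsf{p})=(k_0,\ldots,k_M)$ and $\beta^\prime(\mathsf{p})=(m_0,\ldots,m_M)$. (Equivalently, collapsing the Dyck subpaths gives a tree with a distinguished root-to-tip trunk, and $k_n$, $m_n$ count the vertices, resp. branch points, at depth $z_n$ not on the trunk.) Notation: $\tilde{k}=(k_1,\ldots,k_M,0)$;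 $\min$ and $\le$ entrywise; $0$ denotes the zero vector. *)

theory Defs
  imports Complex_Main
begin

text \<open>Depths are z(-1) < z(0) < ... < z(M+1), given by z :: int => real.
  A sequence p = (p_0,...,p_L) is a list of length L+1.\<close>

definition trans_scat_seq :: "(int \<Rightarrow> real) \<Rightarrow> nat \<Rightarrow> real list \<Rightarrow> bool" where
  "trans_scat_seq z M p \<longleftrightarrow>
     p \<noteq> [] \<and>
     p ! 0 = z (-1) \<and>
     p ! (length p - 1) = z (int M + 1) \<and>
     (\<forall>i. 1 \<le> i \<and> i < length p - 1 \<longrightarrow> p ! i \<in> z ` {0..int M}) \<and>
     (\<forall>i. i < length p - 1 \<longrightarrow>
        (\<exists>j\<in>{-1..int M}. {p ! i, p ! (i+1)} = {z j, z (j+1)}))"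

definition in_level :: "(int \<Rightarrow> real) \<Rightarrow> nat \<Rightarrow> real list \<Rightarrow> nat \<Rightarrow> nat \<Rightarrow> bool" where
  "in_level z M p n i \<longleftrightarrow> p ! i \<in> z ` {int n..int M + 1}"

definition runs :: "(int \<Rightarrow> real) \<Rightarrow> nat \<Rightarrow> real list \<Rightarrow> nat \<Rightarrow> (nat \<times> nat) set" where
  "runs z M p n = {(a, b). a \<le> b \<and> b \<le> length p - 1 \<and>
      (\<forall>i\<in>{a..b}. in_level z M p n i) \<and>
      (a = 0 \<or> \<not> in_level z M p n (a - 1)) \<and>
      (b = length p - 1 \<or> \<not> in_level z M p n (b + 1))}"

text \<open>Non-trunk runs: those not containing the last index L.\<close>
definition kappa' :: "(int \<Rightarrow> real) \<Rightarrow> nat \<Rightarrow> real list \<Rightarrow> nat \<Rightarrow> nat" where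
  "kappa' z M p n = card {(a, b) \<in> runs z M p n. b < length p - 1}"

definition beta' :: "(int \<Rightarrow> real) \<Rightarrow> nat \<Rightarrow> real list \<Rightarrow> nat \<Rightarrow> nat" where
  "beta' z M p n = card {(a, b) \<in> runs z M p n. b < length p - 1 \<and> a < b}"

definition ktilde :: "nat \<Rightarrow> (nat \<Rightarrow> nat) \<Rightarrow> nat \<Rightarrow> nat" where
  "ktilde M k n = (if n < M then k (n + 1) else 0)"

end

theory Submission imports Defs begin

fun dp :: "int \<Rightarrow> int list \<Rightarrow> nat" where
  "dp l (x # y # r) = (if l \<le> x \<and> y < l then 1 else 0) + dp l (y # r)"
| "dp l _ = 0"

fun tp :: "int \<Rightarrow> int list \<Rightarrow> nat" where
  "tp l (x # y # w # r) = (if l \<le> x \<and> l \<le> y \<and> w < l then 1 else 0) + tp l (y # w # r)"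
| "tp l _ = 0"

fun sk :: "int list \<Rightarrow> bool" where
  "sk (x # y # r) = (\<bar>x - y\<bar> = 1 \<and> sk (y # r))"
| "sk _ = True"

lemma dp_cons: "dp l (x # ys) = (case ys of [] \<Rightarrow> 0 | y # _ \<Rightarrow> (if l \<le> x \<and> y < l then 1 else 0)) + dp l ys"
  by (cases ys) auto

lemma tp_cons: "tp l (x # ys) = (case ys of y # w # _ \<Rightarrow> (if l \<le> x \<and> l \<le> y \<and> w < l then 1 else 0) | _ \<Rightarrow> 0) + tp l ys"
  by (cases ys; cases "tl ys") auto

lemma sk_cons: "sk (x # ys) = ((case ys of [] \<Rightarrow> True | y # _ \<Rightarrow> \<bar>x - y\<bar> = 1) \<and> sk ys)"
  by (cases ys) auto

lemma app0:
  assumes "xs \<noteq> []" "ys \<noteq> []" "last xs < hd ys" "length ys \<ge> 2 \<Longrightarrow> last xs \<le> ys ! 1"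
  shows "dp l (xs @ ys) = dp l xs + dp l ys \<and> tp l (xs @ ys) = tp l xs + tp l ys"
  using assms
proof (induction xs)
  case Nil then show ?case by simp
next
  case (Cons a xs)
  show ?case
  proof (cases xs)
    case Nil
    then show ?thesis using Cons.prems
      by (cases ys; cases "tl ys") (auto simp: dp_cons tp_cons)
  next
    case (Cons x xs')
    have IH: "dp l (xs @ ys) = dp l xs + dp l ys \<and> tp l (xs @ ys) = tp l xs + tp l ys"
      using Cons.IH Cons.prems \<open>xs = x # xs'\<close> by auto
    show ?thesis using IH Cons.prems \<open>xs = x # xs'\<close>
      by (cases xs'; cases ys) (auto simp: dp_cons tp_cons)
  qed
qed

lemma sk_app: "xs \<noteq> [] \<Longrightarrow> ys \<noteq> [] \<Longrightarrow> \<bar>last xs - hd ys\<bar> = 1 \<Longrightarrow> sk xs \<Longrightarrow> sk ys \<Longrightarrow> sk (xs @ ys)"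
proof (induction xs)
  case Nil then show ?case by simp
next
  case (Cons a xs)
  show ?case
  proof (cases xs)
    case Nil
    then show ?thesis using Cons.prems by (cases ys) auto
  next
    case (Cons x xs')
    then have "sk (xs @ ys)" using Cons.IH Cons.prems by (simp add: sk_cons)
    then show ?thesis using Cons.prems \<open>xs = x # xs'\<close> by (simp add: sk_cons)
  qed
qed

lemma dp_snoc: "dp l (ys @ [a, y]) = dp l (ys @ [a]) + (if l \<le> a \<and> y < l then 1 else 0)"
proof (induction ys)
  case Nil then show ?case by simp
next
  case (Cons x ys) then show ?case by (cases ys) simp_all
qed

lemma tp_snoc: "tp l (ys @ [a, b, y]) = tp l (ys @ [a, b]) + (if l \<le> a \<and> l \<le> b \<and> y < l then 1 else 0)"
proof (induction ys)
  case Nil then show ?case by simp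
next
  case (Cons x ys)
  note IH = Cons.IH
  show ?case
  proof (cases ys)
    case Nil then show ?thesis by simp
  next
    case (Cons c ys') then show ?thesis using IH by (cases ys') simp_all
  qed
qed

lemma sk_nth: "sk xs \<Longrightarrow> i + 1 < length xs \<Longrightarrow> \<bar>xs ! i - xs ! (i+1)\<bar> = 1"
proof (induction xs arbitrary: i rule: sk.induct)
  case (1 x y r) then show ?case by (cases i) auto
qed auto


lemma split_lo: "(\<forall>n'. n \<le> n' \<and> n' < L \<longrightarrow> P n') \<longleftrightarrow> ((n < L \<longrightarrow> P n) \<and> (\<forall>n'. Suc n \<le> n' \<and> n' < L \<longrightarrow> P n'))"
  by (metis Suc_le_eq le_eq_less_or_eq)
lemma split_le: "(\<forall>n'. n \<le> n' \<and> n' \<le> L \<longrightarrow> P n') \<longleftrightarrow> ((n \<le> L \<longrightarrow> P n) \<and> (\<forall>n'. Suc n \<le> n' \<and> n' \<le> L \<longrightarrow> P n'))"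
  by (metis Suc_le_eq le_eq_less_or_eq)
lemma cond1: "(int L \<le> int n \<and> int n - 1 < int L) = (L = n)" by auto
lemma cond2: "(int L \<le> int n + 1 \<and> int L \<le> int n \<and> int n - 1 < int L) = (L = n)" by auto

context
  fixes m k :: "nat \<Rightarrow> nat" and M K :: nat
begin

function cw :: "nat \<Rightarrow> nat \<Rightarrow> int list" where
  "cw i n = int n # (if n < M \<and> i < m n then cw i (Suc n) else []) @ [int n - 1]"
  by pat_completeness auto
termination by (relation "measure (\<lambda>(i,n). M - n)") auto

declare cw.simps[simp del]

lemma cw_stop: "\<not> (n < M \<and> i < m n) \<Longrightarrow> cw i n = [int n, int n - 1]"
  by (subst cw.simps) auto

lemma cw_cont: "n < M \<Longrightarrow> i < m n \<Longrightarrow> cw i n = int n # cw i (Suc n) @ [int n - 1]"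
  by (subst cw.simps) auto

lemma cw_shape: "\<exists>ys. cw i n = ys @ [int n, int n - 1]"
proof (induction i n rule: cw.induct)
  case (1 i n)
  show ?case
  proof (cases "n < M \<and> i < m n")
    case True
    then obtain ys where "cw i (Suc n) = ys @ [int n + 1, int n]" using 1 by auto
    then show ?thesis using cw_cont[of n i] True by auto
  next
    case False then show ?thesis using cw_stop by auto
  qed
qed

lemma cw_hd: "hd (cw i n) = int n"
  by (subst cw.simps) simp
lemma cw_ne: "cw i n \<noteq> []"
  by (subst cw.simps) simp

lemma cw_last: "last (cw i n) = int n - 1"
  using cw_shape[of i n] by auto

lemma cw_len: "length (cw i n) \<ge> 2"
  using cw_shape[of i n] by auto

lemma cw_1: "cw i n ! 1 = (if n < M \<and> i < m n then int n + 1 else int n - 1)"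
  by (cases "n < M \<and> i < m n") (auto simp: cw_stop cw_cont nth_append cw_hd hd_conv_nth[symmetric] cw_ne)

lemma cw_sk: "sk (cw i n)"
proof (induction i n rule: cw.induct)
  case (1 i n)
  show ?case
  proof (cases "n < M \<and> i < m n")
    case True
    have "sk (cw i (Suc n) @ [int n - 1])"
      by (rule sk_app) (use 1 True in \<open>auto simp: cw_ne cw_last\<close>)
    then have "sk ([int n] @ (cw i (Suc n) @ [int n - 1]))"
      using sk_app[of "[int n]" "cw i (Suc n) @ [int n - 1]"] by (simp add: cw_ne cw_hd hd_append)
    then show ?thesis using True cw_cont[of n i] by simp
  next
    case False then show ?thesis using cw_stop[of n i] by simp
  qed
qed

lemma cw_set: "n \<le> M \<Longrightarrow> set (cw i n) \<subseteq> {int n - 1..int M}"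
proof (induction i n rule: cw.induct)
  case (1 i n)
  show ?case
  proof (cases "n < M \<and> i < m n")
    case True
    then show ?thesis using 1 cw_cont[of n i] by force
  next
    case False then show ?thesis using cw_stop 1 by auto
  qed
qed

lemma cw_dp: "dp (int L) (cw i n) =
   (if n \<le> L \<and> (\<forall>n'. n \<le> n' \<and> n' < L \<longrightarrow> n' < M \<and> i < m n') then 1 else 0)"
proof (induction i n rule: cw.induct)
  case (1 i n)
  show ?case
  proof (cases "n < M \<and> i < m n")
    case True
    obtain ys where ys: "cw i (Suc n) = ys @ [int n + 1, int n]" using cw_shape[of i "Suc n"] by auto
    have e: "cw i n = ([int n] @ ys @ [int n + 1]) @ [int n, int n - 1]"
      using cw_cont[of n i] True ys by simp
    have e2: "[int n] @ ys @ [int n + 1] @ [int n] = [int n] @ cw i (Suc n)" using ys by simp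
    have "dp (int L) ([int n] @ cw i (Suc n)) = dp (int L) (cw i (Suc n))"
      using app0[of "[int n]" "cw i (Suc n)"] cw_ne cw_hd cw_1 by simp
    then have "dp (int L) (cw i n) = dp (int L) (cw i (Suc n)) + (if L = n then 1 else 0)"
      unfolding e using dp_snoc[of "int L" "[int n] @ ys @ [int n + 1]" "int n" "int n - 1"] e2
      by (simp only: cond1 append_assoc append.simps)
    also have "\<dots> = (if n \<le> L \<and> (\<forall>n'. n \<le> n' \<and> n' < L \<longrightarrow> n' < M \<and> i < m n') then 1 else 0)"
      unfolding 1[OF True] using True
      by (cases "L = n"; cases "L < n") (auto simp: split_lo[of n L])
    finally show ?thesis .
  next
    case False then show ?thesis using cw_stop[of n i]
      by (cases "L = n"; cases "L < n") (auto simp: split_lo[of n L])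
  qed
qed

lemma cw_tp: "tp (int L) (cw i n) =
   (if n \<le> L \<and> (\<forall>n'. n \<le> n' \<and> n' \<le> L \<longrightarrow> n' < M \<and> i < m n') then 1 else 0)"
proof (induction i n rule: cw.induct)
  case (1 i n)
  show ?case
  proof (cases "n < M \<and> i < m n")
    case True
    obtain ys where ys: "cw i (Suc n) = ys @ [int n + 1, int n]" using cw_shape[of i "Suc n"] by auto
    have e: "cw i n = ([int n] @ ys) @ [int n + 1, int n, int n - 1]"
      using cw_cont[of n i] True ys by simp
    have e2: "([int n] @ ys) @ [int n + 1, int n] = [int n] @ cw i (Suc n)" using ys by simp
    have "tp (int L) ([int n] @ cw i (Suc n)) = tp (int L) (cw i (Suc n))"
      using app0[of "[int n]" "cw i (Suc n)"] cw_ne cw_hd cw_1 by simp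
    then have "tp (int L) (cw i n) = tp (int L) (cw i (Suc n)) + (if L = n then 1 else 0)"
      unfolding e using tp_snoc[of "int L" "[int n] @ ys" "int n + 1" "int n" "int n - 1"] e2
      by (simp only: cond2 append_assoc append.simps)
    also have "\<dots> = (if n \<le> L \<and> (\<forall>n'. n \<le> n' \<and> n' \<le> L \<longrightarrow> n' < M \<and> i < m n') then 1 else 0)"
      unfolding 1[OF True] using True
      by (cases "L = n"; cases "L < n") (auto simp: split_le[of n L])
    finally show ?thesis .
  next
    case False then show ?thesis using cw_stop[of n i]
      by (cases "L = n"; cases "L < n") (auto simp: split_le[of n L])
  qed
qed

end

lemma cw_1': "cw m M i n ! Suc 0 = (if n < M \<and> i < m n then int n + 1 else int n - 1)"
  using cw_1[of m M i n] by simp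

lemma sum_ind: "finite A \<Longrightarrow> (\<Sum>x\<in>A. if P x then 1 else 0) = card {x\<in>A. P x}"
proof -
  assume "finite A"
  then have "(\<Sum>x\<in>A. of_bool (P x)) = (of_nat (card (A \<inter> {x. P x})) :: nat)"
    using \<open>finite A\<close> by simp
  moreover have "A \<inter> {x. P x} = {x\<in>A. P x}" by auto
  ultimately show ?thesis by (simp add: of_bool_def)
qed

lemma sum_list_filter_upt: "(\<Sum>i\<leftarrow>filter P [0..<K]. f i) = (\<Sum>i<K. if P i then f i else (0::nat))"
  by (induction K) auto

context
  fixes m k :: "nat \<Rightarrow> nat" and M K :: nat
  assumes k0: "k 0 = 0"
    and mk: "\<forall>n\<le>M. m n \<le> min (k n) (ktilde M k n)"
begin

definition st :: "nat \<Rightarrow> nat \<Rightarrow> bool" where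
  "st i s \<longleftrightarrow> s \<le> M \<and> i < k s \<and> \<not> i < m (s - 1)"

lemma m_le_k: "n \<le> M \<Longrightarrow> m n \<le> k n" using mk by auto
lemma m_le_k1: "n < M \<Longrightarrow> m n \<le> k (Suc n)" using mk[rule_format, of n] by (auto simp: ktilde_def)
lemma mM: "m M = 0" using mk by (auto simp: ktilde_def)
lemma m0: "m 0 = 0" using m_le_k[of 0] k0 by simp

lemma idx_dp:
  assumes "L \<le> M"
  shows "(\<Sum>j<Suc M. if st i (Suc j) then (if Suc j \<le> L \<and> (\<forall>n'. Suc j \<le> n' \<and> n' < L \<longrightarrow> n' < M \<and> i < m n') then 1 else 0) else (0::nat))
        = (if i < k L then 1 else 0)"
proof -
  define Q where "Q s \<longleftrightarrow> st i s \<and> s \<le> L \<and> (\<forall>n'. s \<le> n' \<and> n' < L \<longrightarrow> n' < M \<and> i < m n')" for s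
  have "(\<Sum>j<Suc M. if st i (Suc j) then (if Suc j \<le> L \<and> (\<forall>n'. Suc j \<le> n' \<and> n' < L \<longrightarrow> n' < M \<and> i < m n') then 1 else 0) else (0::nat))
      = (\<Sum>j<Suc M. if Q (Suc j) then 1 else 0)"
    by (rule sum.cong) (auto simp: Q_def)
  also have "\<dots> = card {j\<in>{..<Suc M}. Q (Suc j)}" by (rule sum_ind) simp
  also have "\<dots> = (if i < k L then 1 else 0)"
  proof -
    have uniq: "s1 = s2" if "Q s1" "Q s2" for s1 s2
    proof (rule ccontr)
      assume "s1 \<noteq> s2"
      then consider "s1 < s2" | "s2 < s1" by linarith
      then show False
      proof cases
        case 1
        moreover have "s2 \<le> L" using that(2) unfolding Q_def by simp
        ultimately have "s1 \<le> s2 - 1 \<and> s2 - 1 < L" by linarith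
        then have "i < m (s2 - 1)" using that(1) unfolding Q_def by blast
        then show False using that(2) unfolding Q_def st_def by auto
      next
        case 2
        moreover have "s1 \<le> L" using that(1) unfolding Q_def by simp
        ultimately have "s2 \<le> s1 - 1 \<and> s1 - 1 < L" by linarith
        then have "i < m (s1 - 1)" using that(2) unfolding Q_def by blast
        then show False using that(1) unfolding Q_def st_def by auto
      qed
    qed
    show ?thesis
    proof (cases "i < k L")
      case True
      then have L1: "1 \<le> L" using k0 by (cases L) auto
      define s0 where "s0 = (LEAST s. 1 \<le> s \<and> (\<forall>n'. s \<le> n' \<and> n' < L \<longrightarrow> i < m n'))"
      have P0: "1 \<le> s0 \<and> (\<forall>n'. s0 \<le> n' \<and> n' < L \<longrightarrow> i < m n')"
        unfolding s0_def by (rule LeastI[of _ L]) (use L1 in auto)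
      have s0L: "s0 \<le> L" unfolding s0_def by (rule Least_le) (use L1 in auto)
      have nm: "\<not> i < m (s0 - 1)"
      proof
        assume a: "i < m (s0 - 1)"
        show False
        proof (cases "s0 = 1")
          case True then show False using a m0 by simp
        next
          case False
          have "1 \<le> s0 - 1 \<and> (\<forall>n'. s0 - 1 \<le> n' \<and> n' < L \<longrightarrow> i < m n')"
          proof (intro conjI allI impI)
            show "1 \<le> s0 - 1" using P0 False by linarith
            fix n' assume "s0 - 1 \<le> n' \<and> n' < L"
            then consider "n' = s0 - 1" | "s0 \<le> n' \<and> n' < L" by linarith
            then show "i < m n'" using a P0 by cases auto
          qed
          then have "(LEAST s. 1 \<le> s \<and> (\<forall>n'. s \<le> n' \<and> n' < L \<longrightarrow> i < m n')) \<le> s0 - 1"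
            by (rule Least_le)
          then have "s0 \<le> s0 - 1" by (simp only: s0_def[symmetric])
          then show False using P0 by linarith
        qed
      qed
      have iks: "i < k s0"
      proof (cases "s0 = L")
        case True then show ?thesis using \<open>i < k L\<close> by simp
      next
        case False
        then have "i < m s0" using P0 s0L by auto
        then show ?thesis using m_le_k[of s0] s0L assms by linarith
      qed
      have Qs0: "Q s0" unfolding Q_def st_def using P0 s0L nm iks assms by auto
      have "{j\<in>{..<Suc M}. Q (Suc j)} = {s0 - 1}"
      proof -
        have "s0 - 1 \<in> {j\<in>{..<Suc M}. Q (Suc j)}" using Qs0 P0 s0L assms by auto
        moreover have "j = s0 - 1" if "j \<in> {j\<in>{..<Suc M}. Q (Suc j)}" for j
          using uniq[of "Suc j" s0] that Qs0 by auto
        ultimately show ?thesis by blast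
      qed
      then show ?thesis using True by simp
    next
      case False
      have "\<not> Q s" for s
      proof
        assume q: "Q s"
        then have sL: "s \<le> L" and "st i s" unfolding Q_def by auto
        show False
        proof (cases "s = L")
          case True then show False using \<open>st i s\<close> False unfolding st_def by simp
        next
          case F: False
          then have "s < L" using sL by simp
          then have "i < m (L - 1)" using q unfolding Q_def by auto
          moreover have "m (L - 1) \<le> k L" using m_le_k1[of "L - 1"] \<open>s < L\<close> assms by simp
          ultimately show False using False by simp
        qed
      qed
      then show ?thesis using False by simp
    qed
  qed
  finally show ?thesis .
qed

lemma idx_tp:
  assumes "L \<le> M"
  shows "(\<Sum>j<Suc M. if st i (Suc j) then (if Suc j \<le> L \<and> (\<forall>n'. Suc j \<le> n' \<and> n' \<le> L \<longrightarrow> n' < M \<and> i < m n') then 1 else 0) else (0::nat))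
        = (if i < m L then 1 else 0)"
proof -
  define Q where "Q s \<longleftrightarrow> st i s \<and> s \<le> L \<and> (\<forall>n'. s \<le> n' \<and> n' \<le> L \<longrightarrow> n' < M \<and> i < m n')" for s
  have "(\<Sum>j<Suc M. if st i (Suc j) then (if Suc j \<le> L \<and> (\<forall>n'. Suc j \<le> n' \<and> n' \<le> L \<longrightarrow> n' < M \<and> i < m n') then 1 else 0) else (0::nat))
      = (\<Sum>j<Suc M. if Q (Suc j) then 1 else 0)"
    by (rule sum.cong) (auto simp: Q_def)
  also have "\<dots> = card {j\<in>{..<Suc M}. Q (Suc j)}" by (rule sum_ind) simp
  also have "\<dots> = (if i < m L then 1 else 0)"
  proof -
    have uniq: "s1 = s2" if "Q s1" "Q s2" for s1 s2
    proof (rule ccontr)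
      assume "s1 \<noteq> s2"
      then consider "s1 < s2" | "s2 < s1" by linarith
      then show False
      proof cases
        case 1
        moreover have "s2 \<le> L" using that(2) unfolding Q_def by simp
        ultimately have "s1 \<le> s2 - 1 \<and> s2 - 1 \<le> L" by linarith
        then have "i < m (s2 - 1)" using that(1) unfolding Q_def by blast
        then show False using that(2) unfolding Q_def st_def by auto
      next
        case 2
        moreover have "s1 \<le> L" using that(1) unfolding Q_def by simp
        ultimately have "s2 \<le> s1 - 1 \<and> s1 - 1 \<le> L" by linarith
        then have "i < m (s1 - 1)" using that(2) unfolding Q_def by blast
        then show False using that(1) unfolding Q_def st_def by auto
      qed
    qed
    show ?thesis
    proof (cases "i < m L")
      case True
      then have L1: "1 \<le> L" using m0 by (cases L) auto
      have LM: "L < M" using True mM assms by (cases "L = M") auto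
      define s0 where "s0 = (LEAST s. 1 \<le> s \<and> (\<forall>n'. s \<le> n' \<and> n' \<le> L \<longrightarrow> i < m n'))"
      have P0: "1 \<le> s0 \<and> (\<forall>n'. s0 \<le> n' \<and> n' \<le> L \<longrightarrow> i < m n')"
        unfolding s0_def by (rule LeastI[of _ L]) (use L1 True in auto)
      have s0L: "s0 \<le> L" unfolding s0_def by (rule Least_le) (use L1 True in auto)
      have nm: "\<not> i < m (s0 - 1)"
      proof
        assume a: "i < m (s0 - 1)"
        show False
        proof (cases "s0 = 1")
          case True then show False using a m0 by simp
        next
          case False
          have "1 \<le> s0 - 1 \<and> (\<forall>n'. s0 - 1 \<le> n' \<and> n' \<le> L \<longrightarrow> i < m n')"
          proof (intro conjI allI impI)
            show "1 \<le> s0 - 1" using P0 False by linarith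
            fix n' assume "s0 - 1 \<le> n' \<and> n' \<le> L"
            then consider "n' = s0 - 1" | "s0 \<le> n' \<and> n' \<le> L" by linarith
            then show "i < m n'" using a P0 by cases auto
          qed
          then have "(LEAST s. 1 \<le> s \<and> (\<forall>n'. s \<le> n' \<and> n' \<le> L \<longrightarrow> i < m n')) \<le> s0 - 1"
            by (rule Least_le)
          then have "s0 \<le> s0 - 1" by (simp only: s0_def[symmetric])
          then show False using P0 by linarith
        qed
      qed
      have "i < m s0" using P0 s0L by auto
      then have iks: "i < k s0" using m_le_k[of s0] s0L assms by linarith
      have Qs0: "Q s0" unfolding Q_def st_def using P0 s0L nm iks assms LM by auto
      have "{j\<in>{..<Suc M}. Q (Suc j)} = {s0 - 1}"
      proof -
        have "s0 - 1 \<in> {j\<in>{..<Suc M}. Q (Suc j)}" using Qs0 P0 s0L assms by auto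
        moreover have "j = s0 - 1" if "j \<in> {j\<in>{..<Suc M}. Q (Suc j)}" for j
          using uniq[of "Suc j" s0] that Qs0 by auto
        ultimately show ?thesis by blast
      qed
      then show ?thesis using True by simp
    next
      case False
      have "\<not> Q s" for s
      proof
        assume q: "Q s"
        then have "i < m L" unfolding Q_def by auto
        then show False using False by simp
      qed
      then show ?thesis using False by simp
    qed
  qed
  finally show ?thesis .
qed

definition chs :: "nat \<Rightarrow> nat list" where "chs j = filter (\<lambda>i. st i (Suc j)) [0..<K]"
definition blk :: "nat \<Rightarrow> int list" where "blk j = int j # concat (map (\<lambda>i. cw m M i (Suc j)) (chs j))"
definition Pn :: "nat \<Rightarrow> int list" where "Pn n = (-1) # concat (map blk [0..<n])"
definition W :: "int list" where "W = Pn (Suc M) @ [int M + 1]"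

lemma pieces: "xs \<noteq> [] \<Longrightarrow> last xs = int j \<Longrightarrow>
  dp l (xs @ concat (map (\<lambda>i. cw m M i (Suc j)) is)) = dp l xs + (\<Sum>i\<leftarrow>is. dp l (cw m M i (Suc j)))
  \<and> tp l (xs @ concat (map (\<lambda>i. cw m M i (Suc j)) is)) = tp l xs + (\<Sum>i\<leftarrow>is. tp l (cw m M i (Suc j)))
  \<and> last (xs @ concat (map (\<lambda>i. cw m M i (Suc j)) is)) = int j
  \<and> (sk xs \<longrightarrow> sk (xs @ concat (map (\<lambda>i. cw m M i (Suc j)) is)))"
proof (induction "is" arbitrary: xs)
  case Nil then show ?case by simp
next
  case (Cons i "is")
  define c where "c = cw m M i (Suc j)"
  have e: "xs @ concat (map (\<lambda>i. cw m M i (Suc j)) (i # is)) = (xs @ c) @ concat (map (\<lambda>i. cw m M i (Suc j)) is)"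
    by (simp add: c_def)
  have a: "dp l (xs @ c) = dp l xs + dp l c \<and> tp l (xs @ c) = tp l xs + tp l c"
    by (rule app0) (use Cons.prems in \<open>auto simp: c_def cw_ne cw_hd cw_1'\<close>)
  have ne: "xs @ c \<noteq> []" "last (xs @ c) = int j"
    using Cons.prems by (auto simp: c_def cw_ne cw_last)
  have s: "sk xs \<Longrightarrow> sk (xs @ c)"
    by (rule sk_app) (use Cons.prems in \<open>auto simp: c_def cw_ne cw_hd cw_sk\<close>)
  show ?case using Cons.IH[OF ne] a s unfolding e by (simp add: c_def)
qed

lemma blk_ne: "blk j \<noteq> []" and blk_hd: "hd (blk j) = int j"
  by (simp_all add: blk_def)

lemma blk_facts: "dp l (blk j) = (\<Sum>i\<leftarrow>chs j. dp l (cw m M i (Suc j)))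
  \<and> tp l (blk j) = (\<Sum>i\<leftarrow>chs j. tp l (cw m M i (Suc j)))
  \<and> last (blk j) = int j \<and> sk (blk j)"
  using pieces[of "[int j]" j l "chs j"] unfolding blk_def by simp

lemma blk_1: "2 \<le> length (blk j) \<Longrightarrow> blk j ! 1 = int j + 1"
proof (cases "chs j")
  case Nil then show ?thesis if "2 \<le> length (blk j)" using that by (simp add: blk_def)
next
  case (Cons a as)
  have "blk j ! 1 = (cw m M a (Suc j) @ concat (map (\<lambda>i. cw m M i (Suc j)) as)) ! 0"
    by (simp add: blk_def Cons)
  also have "\<dots> = cw m M a (Suc j) ! 0" using cw_ne[of m M a "Suc j"] by (cases "cw m M a (Suc j)") auto
  also have "\<dots> = int j + 1" using cw_hd[of m M a "Suc j"] cw_ne[of m M a "Suc j"] by (simp add: hd_conv_nth)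
  finally show ?thesis .
qed

lemma blk_1': "2 \<le> length (blk j) \<Longrightarrow> blk j ! Suc 0 = int j + 1"
  using blk_1[of j] by simp

lemma blk_set: "j \<le> M \<Longrightarrow> set (blk j) \<subseteq> {int j..int M}"
proof -
  assume "j \<le> M"
  have "set (cw m M i (Suc j)) \<subseteq> {int j..int M}" if "i \<in> set (chs j)" for i
  proof -
    have "Suc j \<le> M" using that by (simp add: chs_def st_def)
    then show ?thesis using cw_set[of "Suc j" M m i] by auto
  qed
  then show ?thesis using \<open>j \<le> M\<close> by (auto simp: blk_def)
qed

lemma Pn_Suc: "Pn (Suc n) = Pn n @ blk n" by (simp add: Pn_def)

lemma Pn_facts: "Pn n \<noteq> [] \<and> last (Pn n) = int n - 1 \<and> dp l (Pn n) = (\<Sum>j<n. dp l (blk j))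
  \<and> tp l (Pn n) = (\<Sum>j<n. tp l (blk j)) \<and> sk (Pn n)"
proof (induction n)
  case 0 then show ?case by (simp add: Pn_def)
next
  case (Suc n)
  have a: "dp l (Pn n @ blk n) = dp l (Pn n) + dp l (blk n) \<and> tp l (Pn n @ blk n) = tp l (Pn n) + tp l (blk n)"
    by (rule app0) (use Suc.IH in \<open>auto simp: blk_ne blk_hd blk_1'\<close>)
  have s: "sk (Pn n @ blk n)"
    by (rule sk_app) (use Suc.IH blk_facts[of l n] in \<open>auto simp: blk_ne blk_hd\<close>)
  show ?case unfolding Pn_Suc using a s Suc.IH blk_facts[of l n] blk_ne[of n] by simp
qed

lemma mid_set: "n \<le> Suc M \<Longrightarrow> set (concat (map blk [0..<n])) \<subseteq> {0..int M}"
proof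
  fix x assume n: "n \<le> Suc M" and "x \<in> set (concat (map blk [0..<n]))"
  then obtain j where j: "j < n" "x \<in> set (blk j)" by auto
  then have "x \<in> {int j..int M}" using blk_set[of j] n by auto
  then show "x \<in> {0..int M}" by auto
qed

lemma W_facts: "dp l W = dp l (Pn (Suc M)) \<and> tp l W = tp l (Pn (Suc M)) \<and> sk W"
proof -
  have a: "dp l (Pn (Suc M) @ [int M + 1]) = dp l (Pn (Suc M)) + dp l [int M + 1] \<and>
     tp l (Pn (Suc M) @ [int M + 1]) = tp l (Pn (Suc M)) + tp l [int M + 1]"
    by (rule app0) (use Pn_facts[of "Suc M" l] in auto)
  have s: "sk (Pn (Suc M) @ [int M + 1])"
    by (rule sk_app) (use Pn_facts[of "Suc M" l] in auto)
  show ?thesis using a s unfolding W_def by simp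
qed

lemma W_dp_sum: "dp (int L) W = (\<Sum>i<K. \<Sum>j<Suc M. if st i (Suc j) then (if Suc j \<le> L \<and> (\<forall>n'. Suc j \<le> n' \<and> n' < L \<longrightarrow> n' < M \<and> i < m n') then 1 else 0) else (0::nat))"
proof -
  have "dp (int L) W = (\<Sum>j<Suc M. \<Sum>i\<leftarrow>chs j. dp (int L) (cw m M i (Suc j)))"
    using W_facts Pn_facts blk_facts by simp
  also have "\<dots> = (\<Sum>j<Suc M. \<Sum>i<K. if st i (Suc j) then (if Suc j \<le> L \<and> (\<forall>n'. Suc j \<le> n' \<and> n' < L \<longrightarrow> n' < M \<and> i < m n') then 1 else 0) else (0::nat))"
    unfolding chs_def sum_list_filter_upt cw_dp ..
  also have "\<dots> = (\<Sum>i<K. \<Sum>j<Suc M. if st i (Suc j) then (if Suc j \<le> L \<and> (\<forall>n'. Suc j \<le> n' \<and> n' < L \<longrightarrow> n' < M \<and> i < m n') then 1 else 0) else (0::nat))"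
    by (rule sum.swap)
  finally show ?thesis .
qed

lemma W_tp_sum: "tp (int L) W = (\<Sum>i<K. \<Sum>j<Suc M. if st i (Suc j) then (if Suc j \<le> L \<and> (\<forall>n'. Suc j \<le> n' \<and> n' \<le> L \<longrightarrow> n' < M \<and> i < m n') then 1 else 0) else (0::nat))"
proof -
  have "tp (int L) W = (\<Sum>j<Suc M. \<Sum>i\<leftarrow>chs j. tp (int L) (cw m M i (Suc j)))"
    using W_facts Pn_facts blk_facts by simp
  also have "\<dots> = (\<Sum>j<Suc M. \<Sum>i<K. if st i (Suc j) then (if Suc j \<le> L \<and> (\<forall>n'. Suc j \<le> n' \<and> n' \<le> L \<longrightarrow> n' < M \<and> i < m n') then 1 else 0) else (0::nat))"
    unfolding chs_def sum_list_filter_upt cw_tp ..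
  also have "\<dots> = (\<Sum>i<K. \<Sum>j<Suc M. if st i (Suc j) then (if Suc j \<le> L \<and> (\<forall>n'. Suc j \<le> n' \<and> n' \<le> L \<longrightarrow> n' < M \<and> i < m n') then 1 else 0) else (0::nat))"
    by (rule sum.swap)
  finally show ?thesis .
qed

lemma W_dp: "L \<le> M \<Longrightarrow> k L \<le> K \<Longrightarrow> dp (int L) W = k L"
proof -
  assume a: "L \<le> M" "k L \<le> K"
  have "dp (int L) W = (\<Sum>i<K. if i < k L then 1 else 0)"
    unfolding W_dp_sum using idx_dp[OF a(1)] by simp
  also have "\<dots> = card {i\<in>{..<K}. i < k L}" by (rule sum_ind) simp
  also have "{i\<in>{..<K}. i < k L} = {..<k L}" using a by auto
  finally show ?thesis by simp
qed

lemma W_tp: "L \<le> M \<Longrightarrow> k L \<le> K \<Longrightarrow> tp (int L) W = m L"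
proof -
  assume a: "L \<le> M" "k L \<le> K"
  have "tp (int L) W = (\<Sum>i<K. if i < m L then 1 else 0)"
    unfolding W_tp_sum using idx_tp[OF a(1)] by simp
  also have "\<dots> = card {i\<in>{..<K}. i < m L}" by (rule sum_ind) simp
  also have "{i\<in>{..<K}. i < m L} = {..<m L}" using a m_le_k[of L] by auto
  finally show ?thesis by simp
qed

lemma W_shape: "W = (-1) # concat (map blk [0..<Suc M]) @ [int M + 1]"
  by (simp add: W_def Pn_def)

end

lemma least_run:
  fixes P :: "nat \<Rightarrow> bool"
  assumes "P b"
  defines "a \<equiv> LEAST a. \<forall>i\<in>{a..b}. P i"
  shows "a \<le> b \<and> (\<forall>i\<in>{a..b}. P i) \<and> (a = 0 \<or> \<not> P (a - 1))"
proof -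
  have A: "\<forall>i\<in>{a..b}. P i" unfolding a_def by (rule LeastI[of _ b]) (use assms in auto)
  have B: "a \<le> b" unfolding a_def by (rule Least_le) (use assms in auto)
  have C: "a = 0 \<or> \<not> P (a - 1)"
  proof (rule ccontr)
    assume "\<not> (a = 0 \<or> \<not> P (a - 1))"
    then have a0: "a > 0" "P (a - 1)" by auto
    have "\<forall>i\<in>{a-1..b}. P i"
    proof
      fix i assume "i \<in> {a-1..b}"
      then consider "i = a - 1" | "i \<in> {a..b}" by force
      then show "P i" using A a0 by cases auto
    qed
    then have "(LEAST a. \<forall>i\<in>{a..b}. P i) \<le> a - 1" by (rule Least_le)
    then have "a \<le> a - 1" by (simp only: a_def[symmetric])
    then show False using a0 by linarith
  qed
  show ?thesis using A B C by blast
qed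

lemma runs_card:
  fixes P :: "nat \<Rightarrow> bool" and N :: nat
  shows "card {(a, b) \<in> {(a, b). a \<le> b \<and> b \<le> N \<and> (\<forall>i\<in>{a..b}. P i) \<and> (a = 0 \<or> \<not> P (a - 1)) \<and> (b = N \<or> \<not> P (b + 1))}. b < N}
         = card {b. b < N \<and> P b \<and> \<not> P (b + 1)}"
    and "card {(a, b) \<in> {(a, b). a \<le> b \<and> b \<le> N \<and> (\<forall>i\<in>{a..b}. P i) \<and> (a = 0 \<or> \<not> P (a - 1)) \<and> (b = N \<or> \<not> P (b + 1))}. b < N \<and> a < b}
         = card {b. 0 < b \<and> b < N \<and> P (b - 1) \<and> P b \<and> \<not> P (b + 1)}"
proof -
  define R where "R = {(a, b). a \<le> b \<and> b \<le> N \<and> (\<forall>i\<in>{a..b}. P i) \<and> (a = 0 \<or> \<not> P (a - 1)) \<and> (b = N \<or> \<not> P (b + 1))}"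
  have inj: "inj_on snd R"
  proof (rule inj_onI)
    fix x y assume x: "x \<in> R" and y: "y \<in> R" and s: "snd x = snd y"
    obtain a b where xa: "x = (a, b)" by (cases x)
    obtain a' where ya: "y = (a', b)" using s xa by (cases y) auto
    have "a = a'"
    proof (rule ccontr)
      assume "a \<noteq> a'"
      then consider "a < a'" | "a' < a" by linarith
      then show False
      proof cases
        case 1
        moreover have "a' \<le> b" "\<forall>i\<in>{a..b}. P i" using x y unfolding xa ya R_def by auto
        moreover have "a' - 1 \<in> {a..b}" using 1 \<open>a' \<le> b\<close> by auto
        ultimately have "P (a' - 1)" by blast
        then show False using 1 y unfolding ya R_def by auto
      next
        case 2
        moreover have "a \<le> b" "\<forall>i\<in>{a'..b}. P i" using x y unfolding xa ya R_def by auto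
        moreover have "a - 1 \<in> {a'..b}" using 2 \<open>a \<le> b\<close> by auto
        ultimately have "P (a - 1)" by blast
        then show False using 2 x unfolding xa R_def by auto
      qed
    qed
    then show "x = y" using xa ya by simp
  qed
  have img1: "snd ` {(a, b) \<in> R. b < N} = {b. b < N \<and> P b \<and> \<not> P (b + 1)}"
  proof
    show "snd ` {(a, b) \<in> R. b < N} \<subseteq> {b. b < N \<and> P b \<and> \<not> P (b + 1)}"
      unfolding R_def by auto
    show "{b. b < N \<and> P b \<and> \<not> P (b + 1)} \<subseteq> snd ` {(a, b) \<in> R. b < N}"
    proof
      fix b assume b: "b \<in> {b. b < N \<and> P b \<and> \<not> P (b + 1)}"
      define a where "a = (LEAST a. \<forall>i\<in>{a..b}. P i)"
      have "a \<le> b \<and> (\<forall>i\<in>{a..b}. P i) \<and> (a = 0 \<or> \<not> P (a - 1))"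
        unfolding a_def by (rule least_run) (use b in auto)
      then have "(a, b) \<in> {(a, b) \<in> R. b < N}" using b unfolding R_def by auto
      then show "b \<in> snd ` {(a, b) \<in> R. b < N}" by force
    qed
  qed
  have img2: "snd ` {(a, b) \<in> R. b < N \<and> a < b} = {b. 0 < b \<and> b < N \<and> P (b - 1) \<and> P b \<and> \<not> P (b + 1)}"
  proof
    show "snd ` {(a, b) \<in> R. b < N \<and> a < b} \<subseteq> {b. 0 < b \<and> b < N \<and> P (b - 1) \<and> P b \<and> \<not> P (b + 1)}"
      unfolding R_def by auto
    show "{b. 0 < b \<and> b < N \<and> P (b - 1) \<and> P b \<and> \<not> P (b + 1)} \<subseteq> snd ` {(a, b) \<in> R. b < N \<and> a < b}"
    proof
      fix b assume b: "b \<in> {b. 0 < b \<and> b < N \<and> P (b - 1) \<and> P b \<and> \<not> P (b + 1)}"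
      define a where "a = (LEAST a. \<forall>i\<in>{a..b}. P i)"
      have r: "a \<le> b \<and> (\<forall>i\<in>{a..b}. P i) \<and> (a = 0 \<or> \<not> P (a - 1))"
        unfolding a_def by (rule least_run) (use b in auto)
      have "a \<noteq> b" using r b by auto
      then have "(a, b) \<in> {(a, b) \<in> R. b < N \<and> a < b}" using r b unfolding R_def by auto
      then show "b \<in> snd ` {(a, b) \<in> R. b < N \<and> a < b}" by force
    qed
  qed
  have i1: "inj_on snd {(a, b) \<in> R. b < N}" by (rule inj_on_subset[OF inj]) auto
  have i2: "inj_on snd {(a, b) \<in> R. b < N \<and> a < b}" by (rule inj_on_subset[OF inj]) auto
  show "card {(a, b) \<in> {(a, b). a \<le> b \<and> b \<le> N \<and> (\<forall>i\<in>{a..b}. P i) \<and> (a = 0 \<or> \<not> P (a - 1)) \<and> (b = N \<or> \<not> P (b + 1))}. b < N}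
         = card {b. b < N \<and> P b \<and> \<not> P (b + 1)}"
    using card_image[OF i1] img1 unfolding R_def by simp
  show "card {(a, b) \<in> {(a, b). a \<le> b \<and> b \<le> N \<and> (\<forall>i\<in>{a..b}. P i) \<and> (a = 0 \<or> \<not> P (a - 1)) \<and> (b = N \<or> \<not> P (b + 1))}. b < N \<and> a < b}
         = card {b. 0 < b \<and> b < N \<and> P (b - 1) \<and> P b \<and> \<not> P (b + 1)}"
    using card_image[OF i2] img2 unfolding R_def by simp
qed

lemma dp_card: "dp l xs = card {b. b + 1 < length xs \<and> l \<le> xs ! b \<and> xs ! (b + 1) < l}"
proof (induction l xs rule: dp.induct)
  case (1 l x y r)
  let ?S = "{b. b + 1 < length (y # r) \<and> l \<le> (y # r) ! b \<and> (y # r) ! (b + 1) < l}"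
  have e: "{b. b + 1 < length (x # y # r) \<and> l \<le> (x # y # r) ! b \<and> (x # y # r) ! (b + 1) < l}
      = {b::nat. b = 0 \<and> l \<le> x \<and> y < l} \<union> Suc ` ?S"
  proof (rule set_eqI)
    fix b show "b \<in> {b. b + 1 < length (x # y # r) \<and> l \<le> (x # y # r) ! b \<and> (x # y # r) ! (b + 1) < l}
      \<longleftrightarrow> b \<in> {b::nat. b = 0 \<and> l \<le> x \<and> y < l} \<union> Suc ` ?S"
      by (cases b) auto
  qed
  have f: "finite ?S" by (rule finite_subset[of _ "{..<length (y # r)}"]) auto
  have "card ({b::nat. b = 0 \<and> l \<le> x \<and> y < l} \<union> Suc ` ?S) = card {b::nat. b = 0 \<and> l \<le> x \<and> y < l} + card (Suc ` ?S)"
    using f by (subst card_Un_disjoint) auto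
  also have "card (Suc ` ?S) = card ?S" by (rule card_image) auto
  also have "card {b::nat. b = 0 \<and> l \<le> x \<and> y < l} = (if l \<le> x \<and> y < l then 1 else 0)" by auto
  finally show ?case using 1 e by simp
qed auto

lemma tp_card: "tp l xs = card {b. b + 2 < length xs \<and> l \<le> xs ! b \<and> l \<le> xs ! (b + 1) \<and> xs ! (b + 2) < l}"
proof (induction l xs rule: tp.induct)
  case (1 l x y w r)
  let ?S = "{b. b + 2 < length (y # w # r) \<and> l \<le> (y # w # r) ! b \<and> l \<le> (y # w # r) ! (b + 1) \<and> (y # w # r) ! (b + 2) < l}"
  have e: "{b. b + 2 < length (x # y # w # r) \<and> l \<le> (x # y # w # r) ! b \<and> l \<le> (x # y # w # r) ! (b + 1) \<and> (x # y # w # r) ! (b + 2) < l}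
      = {b::nat. b = 0 \<and> l \<le> x \<and> l \<le> y \<and> w < l} \<union> Suc ` ?S"
  proof (rule set_eqI)
    fix b show "b \<in> {b. b + 2 < length (x # y # w # r) \<and> l \<le> (x # y # w # r) ! b \<and> l \<le> (x # y # w # r) ! (b + 1) \<and> (x # y # w # r) ! (b + 2) < l}
      \<longleftrightarrow> b \<in> {b::nat. b = 0 \<and> l \<le> x \<and> l \<le> y \<and> w < l} \<union> Suc ` ?S"
      by (cases b) auto
  qed
  have f: "finite ?S" by (rule finite_subset[of _ "{..<length (y # w # r)}"]) auto
  have "card ({b::nat. b = 0 \<and> l \<le> x \<and> l \<le> y \<and> w < l} \<union> Suc ` ?S) = card {b::nat. b = 0 \<and> l \<le> x \<and> l \<le> y \<and> w < l} + card (Suc ` ?S)"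
    using f by (subst card_Un_disjoint) auto
  also have "card (Suc ` ?S) = card ?S" by (rule card_image) auto
  also have "card {b::nat. b = 0 \<and> l \<le> x \<and> l \<le> y \<and> w < l} = (if l \<le> x \<and> l \<le> y \<and> w < l then 1 else 0)" by auto
  finally show ?case using 1 e by simp
next
  case ("2_3" l x y) then show ?case by simp
qed auto


theorem proposition2:
  fixes z :: "int \<Rightarrow> real" and M :: nat and k m :: "nat \<Rightarrow> nat"
  assumes "strict_mono_on {-1..int M + 1} z"
    and "M \<ge> 1"
    and "k 0 = 0"
    and "\<forall>n\<le>M. m n \<le> min (k n) (ktilde M k n)"
  shows "\<exists>p. trans_scat_seq z M p \<and>
           (\<forall>n\<le>M. kappa' z M p n = k n \<and> beta' z M p n = m n)"
proof -
  have inj: "inj_on z {-1..int M + 1}" by (rule strict_mono_on_imp_inj_on) (rule assms(1))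
  define K where "K = (\<Sum>n\<le>M. k n)"
  have kK: "k n \<le> K" if "n \<le> M" for n
    unfolding K_def by (rule member_le_sum) (use that in auto)
  define Wl where "Wl = W m k M K"
  define mid where "mid = concat (map (blk m k M K) [0..<Suc M])"
  have shape: "Wl = (-1) # mid @ [int M + 1]"
    unfolding Wl_def mid_def by (rule W_shape[OF assms(3) assms(4)])
  have midset: "set mid \<subseteq> {0..int M}"
    unfolding mid_def by (rule mid_set[OF assms(3) assms(4)]) simp
  have Wset: "set Wl \<subseteq> {-1..int M + 1}" using shape midset by auto
  have skW: "sk Wl" unfolding Wl_def using W_facts[OF assms(3) assms(4)] by blast
  define p where "p = map z Wl"
  have lp: "length p = length Wl" unfolding p_def by simp
  have pn: "p ! i = z (Wl ! i)" if "i < length Wl" for i unfolding p_def using that by simp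
  have lv: "in_level z M p L i \<longleftrightarrow> int L \<le> Wl ! i" if "i < length Wl" for L i
  proof -
    have wi: "Wl ! i \<in> {-1..int M + 1}" using Wset that nth_mem by blast
    have "in_level z M p L i \<longleftrightarrow> z (Wl ! i) \<in> z ` {int L..int M + 1}"
      unfolding in_level_def using pn[OF that] by simp
    also have "\<dots> \<longleftrightarrow> Wl ! i \<in> {int L..int M + 1}"
      by (rule inj_on_image_mem_iff[OF inj wi]) auto
    also have "\<dots> \<longleftrightarrow> int L \<le> Wl ! i" using wi by auto
    finally show ?thesis .
  qed
  have kap: "kappa' z M p L = k L" if "L \<le> M" for L
  proof -
    have "kappa' z M p L = card {b. b < length p - 1 \<and> in_level z M p L b \<and> \<not> in_level z M p L (b + 1)}"
      unfolding kappa'_def runs_def by (rule runs_card(1))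
    also have "{b. b < length p - 1 \<and> in_level z M p L b \<and> \<not> in_level z M p L (b + 1)}
        = {b. b + 1 < length Wl \<and> int L \<le> Wl ! b \<and> Wl ! (b + 1) < int L}"
    proof (rule set_eqI)
      fix b
      show "b \<in> {b. b < length p - 1 \<and> in_level z M p L b \<and> \<not> in_level z M p L (b + 1)} \<longleftrightarrow>
         b \<in> {b. b + 1 < length Wl \<and> int L \<le> Wl ! b \<and> Wl ! (b + 1) < int L}"
      proof (cases "b + 1 < length Wl")
        case True
        then have "b < length Wl" by simp
        then show ?thesis using lv[OF True, of L] lv[OF \<open>b < length Wl\<close>, of L] lp True by auto
      next
        case False then show ?thesis using lp by auto
      qed
    qed
    also have "card \<dots> = dp (int L) Wl" by (rule dp_card[symmetric])
    also have "\<dots> = k L" unfolding Wl_def by (rule W_dp[OF assms(3) assms(4) that kK[OF that]])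
    finally show ?thesis .
  qed
  have bet: "beta' z M p L = m L" if "L \<le> M" for L
  proof -
    have "beta' z M p L = card {b. 0 < b \<and> b < length p - 1 \<and> in_level z M p L (b - 1) \<and> in_level z M p L b \<and> \<not> in_level z M p L (b + 1)}"
      unfolding beta'_def runs_def by (rule runs_card(2))
    also have "{b. 0 < b \<and> b < length p - 1 \<and> in_level z M p L (b - 1) \<and> in_level z M p L b \<and> \<not> in_level z M p L (b + 1)}
        = Suc ` {c. c + 2 < length Wl \<and> int L \<le> Wl ! c \<and> int L \<le> Wl ! (c + 1) \<and> Wl ! (c + 2) < int L}"
    proof (rule set_eqI)
      fix b
      show "b \<in> {b. 0 < b \<and> b < length p - 1 \<and> in_level z M p L (b - 1) \<and> in_level z M p L b \<and> \<not> in_level z M p L (b + 1)} \<longleftrightarrow>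
         b \<in> Suc ` {c. c + 2 < length Wl \<and> int L \<le> Wl ! c \<and> int L \<le> Wl ! (c + 1) \<and> Wl ! (c + 2) < int L}"
      proof (cases b)
        case 0 then show ?thesis by auto
      next
        case (Suc c)
        show ?thesis
        proof (cases "Suc (Suc c) < length Wl")
          case True
          then have "Suc c < length Wl" "c < length Wl" by simp_all
          then show ?thesis using lv[OF True, of L] lv[OF \<open>Suc c < length Wl\<close>, of L]
              lv[OF \<open>c < length Wl\<close>, of L] lp True unfolding Suc by (auto simp: image_iff)
        next
          case False then show ?thesis using lp unfolding Suc by auto
        qed
      qed
    qed
    also have "card \<dots> = card {c. c + 2 < length Wl \<and> int L \<le> Wl ! c \<and> int L \<le> Wl ! (c + 1) \<and> Wl ! (c + 2) < int L}"
      by (rule card_image) auto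
    also have "\<dots> = tp (int L) Wl" by (rule tp_card[symmetric])
    also have "\<dots> = m L" unfolding Wl_def by (rule W_tp[OF assms(3) assms(4) that kK[OF that]])
    finally show ?thesis .
  qed
  have tss: "trans_scat_seq z M p"
    unfolding trans_scat_seq_def
  proof (intro conjI allI impI)
    show "p \<noteq> []" using shape p_def by simp
    show "p ! 0 = z (- 1)" using shape p_def by simp
    show "p ! (length p - 1) = z (int M + 1)" using shape p_def by (simp add: nth_append)
    fix i
    {
      assume i: "1 \<le> i \<and> i < length p - 1"
      then have "Wl ! i = mid ! (i - 1)" using shape lp by (cases i) (auto simp: nth_append)
      moreover have "i - 1 < length mid" using i shape lp by auto
      ultimately have "Wl ! i \<in> {0..int M}" using midset nth_mem by fastforce
      then show "p ! i \<in> z ` {0..int M}" using pn[of i] i lp by auto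
    }
    {
      assume i: "i < length p - 1"
      have d: "\<bar>Wl ! i - Wl ! (i + 1)\<bar> = 1" using sk_nth[OF skW] i lp by simp
      have i1: "i < length Wl" "i + 1 < length Wl" using i lp by auto
      have a: "Wl ! i \<in> {-1..int M + 1}" "Wl ! (i+1) \<in> {-1..int M + 1}"
        using Wset nth_mem[OF i1(1)] nth_mem[OF i1(2)] by blast+
      show "\<exists>j\<in>{- 1..int M}. {p ! i, p ! (i + 1)} = {z j, z (j + 1)}"
      proof (cases "Wl ! (i + 1) = Wl ! i + 1")
        case True
        show ?thesis
          by (rule bexI[of _ "Wl ! i"]) (use True a pn[OF i1(1)] pn[OF i1(2)] in auto)
      next
        case False
        then have "Wl ! i = Wl ! (i + 1) + 1" using d by linarith
        then show ?thesis
          by (intro bexI[of _ "Wl ! (i + 1)"]) (use a pn[OF i1(1)] pn[OF i1(2)] in auto)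
      qed
    }
  qed
  show ?thesis using tss kap bet by blast
qed

end
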